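(* In the game $\mathrm{CN}(7,4)$, if $\mathbf p\notin S$ and $\mathbf p$ has at least two stacks of height $0$, then there is a legal move from $\mathbf p$ to some $\mathbf p'\in S_1\cup S_2\cup S_4$. Here, writing a position as $(a,b,c,d,e,f,g)$ with $a$ a minimum entry, $S_1=\{a=b=0,\ c=g>0,\ d+e+f=c\}$, $S_2=\{a=b=c=d=e=f=g\}$, $S_3=\{a=b,\ c=g,\ d=f,\ a+c=d+e,\ 0<a<e\}$, $S_4=\{a=f,\ b+c=d+e=g+a,\ a<\min\{b,e\},\ a<\max\{c,d\}\}$, and $S=S_1\cup S_2\cup S_3\cup S_4$.
   Context: Circular Nim $\mathrm{CN}(7,4)$: $7$ stacks of tokens are arranged in a circle; a position is a vector $(p_1,\dots,p_7)$ of nonnegative integers giving the stack heights in order around the circle, determined only up to rotation and reflection. A legal move consists of choosing $4$ cyclically consecutive stacks and removing at least one token from at least one of these $4$ stacks (any number from each chosen stack; other stacks unchanged). A position belongs to $S_i$ if some rotation and/or reflection $(a,b,c,d,e,f,g)$ of it with $a$ equal to the minimum entry satisfies the conditions defining $S_i$. *)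

theory Defs
  imports Main
begin

text \<open>Positions of CN(7,4): lists of 7 stack heights in circular order.
  Equivalence up to rotation and reflection is handled via the set of
  symmetric images.\<close>

definition cn_pos :: "nat list \<Rightarrow> bool" where
  "cn_pos p \<longleftrightarrow> length p = 7"

definition sym_images :: "nat list \<Rightarrow> nat list set" where
  "sym_images p = {rotate k p | k. k < 7} \<union> {rotate k (rev p) | k. k < 7}"

definition S1_cond :: "nat list \<Rightarrow> bool" where
  "S1_cond q \<longleftrightarrow> (let a = q!0; b = q!1; c = q!2; d = q!3; e = q!4; f = q!5; g = q!6 in
     a = 0 \<and> b = 0 \<and> c = g \<and> c > 0 \<and> d + e + f = c)"

definition S2_cond :: "nat list \<Rightarrow> bool" where
  "S2_cond q \<longleftrightarrow> (let a = q!0; b = q!1; c = q!2; d = q!3; e = q!4; f = q!5; g = q!6 in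
     a = b \<and> b = c \<and> c = d \<and> d = e \<and> e = f \<and> f = g)"

definition S3_cond :: "nat list \<Rightarrow> bool" where
  "S3_cond q \<longleftrightarrow> (let a = q!0; b = q!1; c = q!2; d = q!3; e = q!4; f = q!5; g = q!6 in
     a = b \<and> c = g \<and> d = f \<and> a + c = d + e \<and> 0 < a \<and> a < e)"

definition S4_cond :: "nat list \<Rightarrow> bool" where
  "S4_cond q \<longleftrightarrow> (let a = q!0; b = q!1; c = q!2; d = q!3; e = q!4; f = q!5; g = q!6 in
     a = f \<and> b + c = d + e \<and> d + e = g + a \<and> a < min b e \<and> a < max c d)"

definition in_class :: "(nat list \<Rightarrow> bool) \<Rightarrow> nat list \<Rightarrow> bool" where
  "in_class C p \<longleftrightarrow> (\<exists>q \<in> sym_images p. q!0 = Min (set p) \<and> C q)"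

definition inS :: "nat list \<Rightarrow> bool" where
  "inS p \<longleftrightarrow> in_class S1_cond p \<or> in_class S2_cond p \<or> in_class S3_cond p \<or> in_class S4_cond p"

definition cn_move :: "nat list \<Rightarrow> nat list \<Rightarrow> bool" where
  "cn_move p p' \<longleftrightarrow> length p = 7 \<and> length p' = 7 \<and>
     (\<exists>i<7. (\<forall>j<7. j \<notin> {(i + k) mod 7 | k. k < 4} \<longrightarrow> p'!j = p!j)) \<and>
     (\<forall>j<7. p'!j \<le> p!j) \<and> p' \<noteq> p"

end

theory Submission
  imports Defs
begin

lemma all7: "(\<forall>j<(7::nat). P j) \<longleftrightarrow> P 0 \<and> P 1 \<and> P 2 \<and> P 3 \<and> P 4 \<and> P 5 \<and> P 6"
  by (simp add: numeral_eq_Suc less_Suc_eq all_conj_distrib)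
lemma ex7: "(\<exists>j<(7::nat). P j) \<longleftrightarrow> P 0 \<or> P 1 \<or> P 2 \<or> P 3 \<or> P 4 \<or> P 5 \<or> P 6"
  by (simp add: numeral_eq_Suc less_Suc_eq ex_disj_distrib conj_disj_distribR)
lemma ex4: "(\<exists>j<(4::nat). P j) \<longleftrightarrow> P 0 \<or> P 1 \<or> P 2 \<or> P 3"
  by (simp add: numeral_eq_Suc less_Suc_eq ex_disj_distrib conj_disj_distribR)
lemma memw: "j \<in> {(i + k) mod 7 | k. k < (4::nat)} \<longleftrightarrow> j = i mod 7 \<or> j = (i+1) mod 7 \<or> j = (i+2) mod 7 \<or> j = (i+3) mod 7"
proof -
  have "j \<in> {(i + k) mod 7 | k. k < (4::nat)} \<longleftrightarrow> (\<exists>k<4. j = (i+k) mod 7)" by auto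
  also have "\<dots> \<longleftrightarrow> j = (i+0) mod 7 \<or> j = (i+1) mod 7 \<or> j = (i+2) mod 7 \<or> j = (i+3) mod 7"
    by (rule ex4)
  finally show ?thesis by simp
qed

lemma move_expl: "cn_move [x0,x1,x2,x3,x4,x5,x6] [y0,y1,y2,y3,y4,y5,y6] \<longleftrightarrow>
  ((y4=x4 \<and> y5=x5 \<and> y6=x6) \<or> (y0=x0 \<and> y5=x5 \<and> y6=x6) \<or> (y0=x0 \<and> y1=x1 \<and> y6=x6) \<or>
   (y0=x0 \<and> y1=x1 \<and> y2=x2) \<or> (y1=x1 \<and> y2=x2 \<and> y3=x3) \<or> (y2=x2 \<and> y3=x3 \<and> y4=x4) \<or>
   (y3=x3 \<and> y4=x4 \<and> y5=x5)) \<and>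
  (y0 \<le> x0 \<and> y1 \<le> x1 \<and> y2 \<le> x2 \<and> y3 \<le> x3 \<and> y4 \<le> x4 \<and> y5 \<le> x5 \<and> y6 \<le> x6) \<and>
  [y0,y1,y2,y3,y4,y5,y6] \<noteq> [x0,x1,x2,x3,x4,x5,x6]"
  unfolding cn_move_def memw all7 ex7 by simp

lemma rot7: "{rotate k p | k. k < (7::nat)} = {rotate 0 p, rotate 1 p, rotate 2 p, rotate 3 p, rotate 4 p, rotate 5 p, rotate 6 p}"
proof -
  have "{rotate k p | k. k < (7::nat)} = {q. \<exists>k<7. q = rotate k p}" by auto
  also have "\<dots> = {rotate 0 p, rotate 1 p, rotate 2 p, rotate 3 p, rotate 4 p, rotate 5 p, rotate 6 p}"
    unfolding ex7 by auto
  finally show ?thesis .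
qed

lemma sym_expl: "sym_images [x0,x1,x2,x3,x4,x5,x6] = {
  [x6,x5,x4,x3,x2,x1,x0],[x5,x4,x3,x2,x1,x0,x6],[x4,x3,x2,x1,x0,x6,x5],[x3,x2,x1,x0,x6,x5,x4],
  [x2,x1,x0,x6,x5,x4,x3],[x1,x0,x6,x5,x4,x3,x2],[x0,x6,x5,x4,x3,x2,x1],
  [x0,x1,x2,x3,x4,x5,x6],[x1,x2,x3,x4,x5,x6,x0],
  [x2,x3,x4,x5,x6,x0,x1],[x3,x4,x5,x6,x0,x1,x2],[x4,x5,x6,x0,x1,x2,x3],[x5,x6,x0,x1,x2,x3,x4],
  [x6,x0,x1,x2,x3,x4,x5]}"
  unfolding sym_images_def rot7 by (simp add: numeral_eq_Suc rotate1_def)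

lemma sym_rot1: "sym_images [x1,x2,x3,x4,x5,x6,x0] = sym_images [x0,x1,x2,x3,x4,x5,x6]"
  unfolding sym_expl by (rule equalityI; simp)
lemma sym_rev: "sym_images (rev p) = sym_images p"
  unfolding sym_images_def by (simp add: Un_commute)

lemma len7: "length p = 7 \<Longrightarrow> \<exists>x0 x1 x2 x3 x4 x5 x6. p = [x0,x1,x2,x3,x4,x5,x6]"
  by (simp add: numeral_eq_Suc length_Suc_conv) blast

definition G :: "nat list \<Rightarrow> bool" where
  "G p \<longleftrightarrow> (\<exists>p'. cn_move p p' \<and> (in_class S1_cond p' \<or> in_class S2_cond p' \<or> in_class S4_cond p'))"

lemma in_class_rot1: "in_class C [x1,x2,x3,x4,x5,x6,x0] = in_class C [x0,x1,x2,x3,x4,x5,x6]"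
proof -
  have "set [x1,x2,x3,x4,x5,x6,x0] = set [x0,x1,x2,x3,x4,x5,x6]" by auto
  then show ?thesis unfolding in_class_def sym_rot1 by simp
qed

lemma in_class_rev: "in_class C (rev p) = in_class C p"
  unfolding in_class_def sym_rev by simp

lemma move_rot1: "cn_move [x0,x1,x2,x3,x4,x5,x6] [y0,y1,y2,y3,y4,y5,y6] \<Longrightarrow>
   cn_move [x1,x2,x3,x4,x5,x6,x0] [y1,y2,y3,y4,y5,y6,y0]"
  unfolding move_expl by auto

lemma move_rev: "cn_move [x0,x1,x2,x3,x4,x5,x6] [y0,y1,y2,y3,y4,y5,y6] \<Longrightarrow>
   cn_move [x6,x5,x4,x3,x2,x1,x0] [y6,y5,y4,y3,y2,y1,y0]"
  unfolding move_expl by auto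

lemma G_rot1: "G [x0,x1,x2,x3,x4,x5,x6] \<Longrightarrow> G [x1,x2,x3,x4,x5,x6,x0]"
proof -
  assume "G [x0,x1,x2,x3,x4,x5,x6]"
  then obtain p' where m: "cn_move [x0,x1,x2,x3,x4,x5,x6] p'" and c: "in_class S1_cond p' \<or> in_class S2_cond p' \<or> in_class S4_cond p'"
    unfolding G_def by blast
  from m have "length p' = 7" unfolding cn_move_def by simp
  then obtain y0 y1 y2 y3 y4 y5 y6 where p': "p' = [y0,y1,y2,y3,y4,y5,y6]" using len7 by blast
  show ?thesis unfolding G_def
    apply (rule exI[of _ "[y1,y2,y3,y4,y5,y6,y0]"])
    using m c p' move_rot1 in_class_rot1 by metis
qed

lemma G_rev: "G p \<Longrightarrow> G (rev p)"
proof -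
  assume "G p"
  then obtain p' where m: "cn_move p p'" and c: "in_class S1_cond p' \<or> in_class S2_cond p' \<or> in_class S4_cond p'"
    unfolding G_def by blast
  from m have "length p' = 7" "length p = 7" unfolding cn_move_def by simp_all
  then obtain y0 y1 y2 y3 y4 y5 y6 x0 x1 x2 x3 x4 x5 x6 where p': "p' = [y0,y1,y2,y3,y4,y5,y6]" 
     "p = [x0,x1,x2,x3,x4,x5,x6]" using len7 by metis
  show ?thesis unfolding G_def
    apply (rule exI[of _ "rev p'"])
    using m c p' move_rev in_class_rev by (metis rev.simps append.simps)
qed

lemma Gwit:
  assumes nS: "\<not> inS [x0,x1,x2,x3,x4,x5,x6]"
  and W: "(ye=x4 \<and> yf=x5 \<and> yg=x6) \<or> (ya=x0 \<and> yf=x5 \<and> yg=x6) \<or> (ya=x0 \<and> yb=x1 \<and> yg=x6) \<or>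
   (ya=x0 \<and> yb=x1 \<and> yc=x2) \<or> (yb=x1 \<and> yc=x2 \<and> yd=x3) \<or> (yc=x2 \<and> yd=x3 \<and> ye=x4) \<or>
   (yd=x3 \<and> ye=x4 \<and> yf=x5)"
  and le: "ya \<le> x0 \<and> yb \<le> x1 \<and> yc \<le> x2 \<and> yd \<le> x3 \<and> ye \<le> x4 \<and> yf \<le> x5 \<and> yg \<le> x6"
  and ic: "in_class C [ya,yb,yc,yd,ye,yf,yg]"
  and C: "C = S1_cond \<or> C = S2_cond \<or> C = S4_cond"
  shows "G [x0,x1,x2,x3,x4,x5,x6]"
proof -
  have ne: "[ya,yb,yc,yd,ye,yf,yg] \<noteq> [x0,x1,x2,x3,x4,x5,x6]"
  proof
    assume "[ya,yb,yc,yd,ye,yf,yg] = [x0,x1,x2,x3,x4,x5,x6]"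
    then have "in_class C [x0,x1,x2,x3,x4,x5,x6]" using ic by simp
    then show False using nS C unfolding inS_def by blast
  qed
  have "cn_move [x0,x1,x2,x3,x4,x5,x6] [ya,yb,yc,yd,ye,yf,yg]"
    unfolding move_expl using W le ne by blast
  then show ?thesis unfolding G_def using ic C by blast
qed

lemma Min0: "0 \<in> set p \<Longrightarrow> Min (set p) = (0::nat)"
  by (metis List.finite_set Min_le le_zero_eq)

lemma icI: "q \<in> sym_images p \<Longrightarrow> 0 \<in> set p \<Longrightarrow> q!0 = 0 \<Longrightarrow> C q \<Longrightarrow> in_class C p"
  unfolding in_class_def using Min0 by metis

lemma split_pos1: "1 \<le> x \<Longrightarrow> 1 \<le> t \<Longrightarrow> t \<le> x + y \<Longrightarrow> \<exists>x' y'. 1 \<le> x' \<and> x' \<le> x \<and> y' \<le> y \<and> x' + y' = (t::nat)"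
  by (rule exI[of _ "min x t"], rule exI[of _ "t - min x t"]) auto
lemma split_pos2: "1 \<le> x \<Longrightarrow> 1 \<le> y \<Longrightarrow> 2 \<le> t \<Longrightarrow> t \<le> x + y \<Longrightarrow> \<exists>x' y'. 1 \<le> x' \<and> 1 \<le> y' \<and> x' \<le> x \<and> y' \<le> y \<and> x' + y' = (t::nat)"
  by (rule exI[of _ "min x (t - 1)"], rule exI[of _ "t - min x (t - 1)"]) auto

lemma coreA: assumes nS: "\<not> inS [0,0,c,d,e,f,g]" shows "G [0,0,c,d,e,f,g]"
proof -
  note hyps = TrueI
  have A0: "G [0,0,c,d,e,f,g]" if H: "g = 0"
    apply (rule Gwit[where ya="0" and yb="0" and yc="0" and yd="0" and ye="0" and yf="0" and yg="0" and C=S2_cond])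
    apply (rule nS)
    subgoal using H hyps by simp
    subgoal using H hyps by (simp add: min_def max_def; arith)
    subgoal apply (rule icI[where q="[0,0,0,0,0,0,0]"])
      subgoal by (simp add: sym_expl)
      subgoal by simp
      subgoal using H hyps by simp
      subgoal using H hyps by (simp add: S2_cond_def Let_def min_def max_def; arith)
      done
    by simp
  have A0b: "G [0,0,c,d,e,f,g]" if H: "c = 0"
    apply (rule Gwit[where ya="0" and yb="0" and yc="0" and yd="0" and ye="0" and yf="0" and yg="0" and C=S2_cond])
    apply (rule nS)
    subgoal using H hyps by simp
    subgoal using H hyps by (simp add: min_def max_def; arith)
    subgoal apply (rule icI[where q="[0,0,0,0,0,0,0]"])
      subgoal by (simp add: sym_expl)
      subgoal by simp
      subgoal using H hyps by simp
      subgoal using H hyps by (simp add: S2_cond_def Let_def min_def max_def; arith)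
      done
    by simp
  have A0c: "G [0,0,c,d,e,f,g]" if H: "d+e+f = 0"
    apply (rule Gwit[where ya="0" and yb="0" and yc="0" and yd="0" and ye="0" and yf="0" and yg="0" and C=S2_cond])
    apply (rule nS)
    subgoal using H hyps by simp
    subgoal using H hyps by (simp add: min_def max_def; arith)
    subgoal apply (rule icI[where q="[0,0,0,0,0,0,0]"])
      subgoal by (simp add: sym_expl)
      subgoal by simp
      subgoal using H hyps by simp
      subgoal using H hyps by (simp add: S2_cond_def Let_def min_def max_def; arith)
      done
    by simp
  have A1: "G [0,0,c,d,e,f,g]" if H: "0<c \<and> 0<g \<and> 0 < d+e+f \<and> g \<le> c \<and> g \<le> d+e+f"
    apply (rule Gwit[where ya="0" and yb="0" and yc="g" and yd="min d (g)" and ye="min e ((g) - min d (g))" and yf="(g) - min d (g) - min e ((g) - min d (g))" and yg="g" and C=S1_cond])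
    apply (rule nS)
    subgoal using H hyps by simp
    subgoal using H hyps by (simp add: min_def max_def; arith)
    subgoal apply (rule icI[where q="[0,0,g,min d (g),min e ((g) - min d (g)),(g) - min d (g) - min e ((g) - min d (g)),g]"])
      subgoal by (simp add: sym_expl)
      subgoal by simp
      subgoal using H hyps by simp
      subgoal using H hyps by (simp add: S1_cond_def Let_def min_def max_def; arith)
      done
    by simp
  have A2: "G [0,0,c,d,e,f,g]" if H: "0<c \<and> 0<g \<and> 0 < d+e+f \<and> c < g \<and> c \<le> d+e+f"
    apply (rule Gwit[where ya="0" and yb="0" and yc="c" and yd="min d (c)" and ye="min e ((c) - min d (c))" and yf="(c) - min d (c) - min e ((c) - min d (c))" and yg="c" and C=S1_cond])
    apply (rule nS)
    subgoal using H hyps by simp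
    subgoal using H hyps by (simp add: min_def max_def; arith)
    subgoal apply (rule icI[where q="[0,0,c,min d (c),min e ((c) - min d (c)),(c) - min d (c) - min e ((c) - min d (c)),c]"])
      subgoal by (simp add: sym_expl)
      subgoal by simp
      subgoal using H hyps by simp
      subgoal using H hyps by (simp add: S1_cond_def Let_def min_def max_def; arith)
      done
    by simp
  have A3: "G [0,0,c,d,e,f,g]" if H: "0<c \<and> 0<g \<and> 0 < d+e+f \<and> d+e+f < c \<and> d+e+f < g"
    apply (rule Gwit[where ya="0" and yb="0" and yc="d+e+f" and yd="d" and ye="e" and yf="f" and yg="d+e+f" and C=S1_cond])
    apply (rule nS)
    subgoal using H hyps by simp
    subgoal using H hyps by (simp add: min_def max_def; arith)
    subgoal apply (rule icI[where q="[0,0,d+e+f,d,e,f,d+e+f]"])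
      subgoal by (simp add: sym_expl)
      subgoal by simp
      subgoal using H hyps by simp
      subgoal using H hyps by (simp add: S1_cond_def Let_def min_def max_def; arith)
      done
    by simp
  have "(g = 0) \<or> (c = 0) \<or> (d+e+f = 0) \<or> (0<c \<and> 0<g \<and> 0 < d+e+f \<and> g \<le> c \<and> g \<le> d+e+f) \<or> (0<c \<and> 0<g \<and> 0 < d+e+f \<and> c < g \<and> c \<le> d+e+f) \<or> (0<c \<and> 0<g \<and> 0 < d+e+f \<and> d+e+f < c \<and> d+e+f < g)" using hyps by arith
  then show ?thesis
    apply (elim disjE)
    apply (erule A0)
    apply (erule A0b)
    apply (erule A0c)
    apply (erule A1)
    apply (erule A2)
    apply (erule A3)
    done
qed

lemma coreB: assumes nS: "\<not> inS [0,b,c,d,e,0,g]" and hb: "0<b" and he: "0<e" and hg: "0<g" and hcd: "0<c \<or> 0<d"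
  shows "G [0,b,c,d,e,0,g]"
proof -
  note hyps = hb he hg hcd
  have B1a: "G [0,b,c,d,e,0,g]" if H: "0<b \<and> 0<e \<and> 0<g \<and> 2 \<le> g \<and> g \<le> b+c \<and> g \<le> d+e \<and> 0<c"
  proof -
    have "\<exists>b1 c1. 1 \<le> b1 \<and> 1 \<le> c1 \<and> b1 \<le> b \<and> c1 \<le> c \<and> b1 + c1 = g" using H by (intro split_pos2[of b c "g"]) auto
    then obtain b1 c1 where O0: "1 \<le> b1 \<and> 1 \<le> c1 \<and> b1 \<le> b \<and> c1 \<le> c \<and> b1 + c1 = g" by blast
    have "\<exists>e1 d1. 1 \<le> e1 \<and> e1 \<le> e \<and> d1 \<le> d \<and> e1 + d1 = g" using H by (intro split_pos1[of e "g" d]) auto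
    then obtain e1 d1 where O1: "1 \<le> e1 \<and> e1 \<le> e \<and> d1 \<le> d \<and> e1 + d1 = g" by blast
    show ?thesis
    apply (rule Gwit[where ya="0" and yb="b1" and yc="c1" and yd="d1" and ye="e1" and yf="0" and yg="g" and C=S4_cond])
    apply (rule nS)
    subgoal using H hyps O0 O1 by simp
    subgoal using H hyps O0 O1 by (simp; arith)
    subgoal apply (rule icI[where q="[0,b1,c1,d1,e1,0,g]"])
      subgoal by (simp add: sym_expl)
      subgoal by simp
      subgoal using H hyps O0 O1 by simp
      subgoal using H hyps O0 O1 by (simp add: S4_cond_def Let_def; arith)
      done
    by simp
  qed
  have B1b: "G [0,b,c,d,e,0,g]" if H: "0<b \<and> 0<e \<and> 0<g \<and> 2 \<le> g \<and> g \<le> b+c \<and> g \<le> d+e \<and> c=0 \<and> 0<d"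
  proof -
    have "\<exists>d1 e1. 1 \<le> d1 \<and> 1 \<le> e1 \<and> d1 \<le> d \<and> e1 \<le> e \<and> d1 + e1 = g" using H by (intro split_pos2[of d e "g"]) auto
    then obtain d1 e1 where O0: "1 \<le> d1 \<and> 1 \<le> e1 \<and> d1 \<le> d \<and> e1 \<le> e \<and> d1 + e1 = g" by blast
    show ?thesis
    apply (rule Gwit[where ya="0" and yb="g" and yc="0" and yd="d1" and ye="e1" and yf="0" and yg="g" and C=S4_cond])
    apply (rule nS)
    subgoal using H hyps O0 by simp
    subgoal using H hyps O0 by (simp; arith)
    subgoal apply (rule icI[where q="[0,g,0,d1,e1,0,g]"])
      subgoal by (simp add: sym_expl)
      subgoal by simp
      subgoal using H hyps O0 by simp
      subgoal using H hyps O0 by (simp add: S4_cond_def Let_def; arith)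
      done
    by simp
  qed
  have B2a: "G [0,b,c,d,e,0,g]" if H: "0<b \<and> 0<e \<and> 0<g \<and> g = 1 \<and> 0<c"
    apply (rule Gwit[where ya="0" and yb="0" and yc="1" and yd="0" and ye="1" and yf="0" and yg="1" and C=S1_cond])
    apply (rule nS)
    subgoal using H hyps by simp
    subgoal using H hyps by (simp add: min_def max_def; arith)
    subgoal apply (rule icI[where q="[0,0,1,0,1,0,1]"])
      subgoal by (simp add: sym_expl)
      subgoal by simp
      subgoal using H hyps by simp
      subgoal using H hyps by (simp add: S1_cond_def Let_def min_def max_def; arith)
      done
    by simp
  have B2b: "G [0,b,c,d,e,0,g]" if H: "0<b \<and> 0<e \<and> 0<g \<and> g = 1 \<and> c=0 \<and> 0<d"
    apply (rule Gwit[where ya="0" and yb="1" and yc="0" and yd="1" and ye="0" and yf="0" and yg="1" and C=S1_cond])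
    apply (rule nS)
    subgoal using H hyps by simp
    subgoal using H hyps by (simp add: min_def max_def; arith)
    subgoal apply (rule icI[where q="[0,0,1,0,1,0,1]"])
      subgoal by (simp add: sym_expl)
      subgoal by simp
      subgoal using H hyps by simp
      subgoal using H hyps by (simp add: S1_cond_def Let_def min_def max_def; arith)
      done
    by simp
  have B3a: "G [0,b,c,d,e,0,g]" if H: "0<b \<and> 0<e \<and> 0<g \<and> b+c < g \<and> b+c \<le> d+e \<and> 0<c"
  proof -
    have "\<exists>e1 d1. 1 \<le> e1 \<and> e1 \<le> e \<and> d1 \<le> d \<and> e1 + d1 = b+c" using H by (intro split_pos1[of e "b+c" d]) auto
    then obtain e1 d1 where O0: "1 \<le> e1 \<and> e1 \<le> e \<and> d1 \<le> d \<and> e1 + d1 = b+c" by blast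
    show ?thesis
    apply (rule Gwit[where ya="0" and yb="b" and yc="c" and yd="d1" and ye="e1" and yf="0" and yg="b+c" and C=S4_cond])
    apply (rule nS)
    subgoal using H hyps O0 by simp
    subgoal using H hyps O0 by (simp; arith)
    subgoal apply (rule icI[where q="[0,b,c,d1,e1,0,b+c]"])
      subgoal by (simp add: sym_expl)
      subgoal by simp
      subgoal using H hyps O0 by simp
      subgoal using H hyps O0 by (simp add: S4_cond_def Let_def; arith)
      done
    by simp
  qed
  have B3b: "G [0,b,c,d,e,0,g]" if H: "0<b \<and> 0<e \<and> 0<g \<and> b+c < g \<and> b+c \<le> d+e \<and> c=0 \<and> 0<d \<and> 2 \<le> b"
  proof -
    have "\<exists>d1 e1. 1 \<le> d1 \<and> 1 \<le> e1 \<and> d1 \<le> d \<and> e1 \<le> e \<and> d1 + e1 = b" using H by (intro split_pos2[of d e "b"]) auto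
    then obtain d1 e1 where O0: "1 \<le> d1 \<and> 1 \<le> e1 \<and> d1 \<le> d \<and> e1 \<le> e \<and> d1 + e1 = b" by blast
    show ?thesis
    apply (rule Gwit[where ya="0" and yb="b" and yc="c" and yd="d1" and ye="e1" and yf="0" and yg="b" and C=S4_cond])
    apply (rule nS)
    subgoal using H hyps O0 by simp
    subgoal using H hyps O0 by (simp; arith)
    subgoal apply (rule icI[where q="[0,b,c,d1,e1,0,b]"])
      subgoal by (simp add: sym_expl)
      subgoal by simp
      subgoal using H hyps O0 by simp
      subgoal using H hyps O0 by (simp add: S4_cond_def Let_def; arith)
      done
    by simp
  qed
  have B3c: "G [0,b,c,d,e,0,g]" if H: "0<b \<and> 0<e \<and> 0<g \<and> b+c < g \<and> b+c \<le> d+e \<and> c=0 \<and> 0<d \<and> b=1"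
    apply (rule Gwit[where ya="0" and yb="1" and yc="0" and yd="0" and ye="1" and yf="0" and yg="1" and C=S1_cond])
    apply (rule nS)
    subgoal using H hyps by simp
    subgoal using H hyps by (simp add: min_def max_def; arith)
    subgoal apply (rule icI[where q="[0,0,1,0,1,0,1]"])
      subgoal by (simp add: sym_expl)
      subgoal by simp
      subgoal using H hyps by simp
      subgoal using H hyps by (simp add: S1_cond_def Let_def min_def max_def; arith)
      done
    by simp
  have B4a: "G [0,b,c,d,e,0,g]" if H: "0<b \<and> 0<e \<and> 0<g \<and> d+e < g \<and> d+e < b+c \<and> 0<d"
  proof -
    have "\<exists>b1 c1. 1 \<le> b1 \<and> b1 \<le> b \<and> c1 \<le> c \<and> b1 + c1 = d+e" using H by (intro split_pos1[of b "d+e" c]) auto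
    then obtain b1 c1 where O0: "1 \<le> b1 \<and> b1 \<le> b \<and> c1 \<le> c \<and> b1 + c1 = d+e" by blast
    show ?thesis
    apply (rule Gwit[where ya="0" and yb="b1" and yc="c1" and yd="d" and ye="e" and yf="0" and yg="d+e" and C=S4_cond])
    apply (rule nS)
    subgoal using H hyps O0 by simp
    subgoal using H hyps O0 by (simp; arith)
    subgoal apply (rule icI[where q="[0,b1,c1,d,e,0,d+e]"])
      subgoal by (simp add: sym_expl)
      subgoal by simp
      subgoal using H hyps O0 by simp
      subgoal using H hyps O0 by (simp add: S4_cond_def Let_def; arith)
      done
    by simp
  qed
  have B4b: "G [0,b,c,d,e,0,g]" if H: "0<b \<and> 0<e \<and> 0<g \<and> d+e < g \<and> d+e < b+c \<and> d=0 \<and> 0<c \<and> 2 \<le> e"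
  proof -
    have "\<exists>b1 c1. 1 \<le> b1 \<and> 1 \<le> c1 \<and> b1 \<le> b \<and> c1 \<le> c \<and> b1 + c1 = e" using H by (intro split_pos2[of b c "e"]) auto
    then obtain b1 c1 where O0: "1 \<le> b1 \<and> 1 \<le> c1 \<and> b1 \<le> b \<and> c1 \<le> c \<and> b1 + c1 = e" by blast
    show ?thesis
    apply (rule Gwit[where ya="0" and yb="b1" and yc="c1" and yd="d" and ye="e" and yf="0" and yg="e" and C=S4_cond])
    apply (rule nS)
    subgoal using H hyps O0 by simp
    subgoal using H hyps O0 by (simp; arith)
    subgoal apply (rule icI[where q="[0,b1,c1,d,e,0,e]"])
      subgoal by (simp add: sym_expl)
      subgoal by simp
      subgoal using H hyps O0 by simp
      subgoal using H hyps O0 by (simp add: S4_cond_def Let_def; arith)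
      done
    by simp
  qed
  have B4c: "G [0,b,c,d,e,0,g]" if H: "0<b \<and> 0<e \<and> 0<g \<and> d+e < g \<and> d+e < b+c \<and> d=0 \<and> 0<c \<and> e=1"
    apply (rule Gwit[where ya="0" and yb="1" and yc="0" and yd="0" and ye="1" and yf="0" and yg="1" and C=S1_cond])
    apply (rule nS)
    subgoal using H hyps by simp
    subgoal using H hyps by (simp add: min_def max_def; arith)
    subgoal apply (rule icI[where q="[0,0,1,0,1,0,1]"])
      subgoal by (simp add: sym_expl)
      subgoal by simp
      subgoal using H hyps by simp
      subgoal using H hyps by (simp add: S1_cond_def Let_def min_def max_def; arith)
      done
    by simp
  consider (g1) "g = 1" | (m1) "2 \<le> g \<and> g \<le> b+c \<and> g \<le> d+e" | (m3) "b+c < g \<and> b+c \<le> d+e" | (m4) "d+e < g \<and> d+e < b+c"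
    using hyps by arith
  then show ?thesis
  proof cases
    case g1
    consider "c = 0" | "0 < c"
      using hyps g1 by arith
    then show ?thesis
    proof cases
      case 1 then show ?thesis using hyps g1 by (intro B2b) arith
    next
      case 2 then show ?thesis using hyps g1 by (intro B2a) arith
    qed
  next
    case m1
    consider "c = 0" | "0 < c"
      using hyps m1 by arith
    then show ?thesis
    proof cases
      case 1 then show ?thesis using hyps m1 by (intro B1b) arith
    next
      case 2 then show ?thesis using hyps m1 by (intro B1a) arith
    qed
  next
    case m3
    consider "0 < c" | "c = 0 \<and> b = 1" | "c = 0 \<and> 2 \<le> b"
      using hyps m3 by arith
    then show ?thesis
    proof cases
      case 1 then show ?thesis using hyps m3 by (intro B3a) arith
    next
      case 2 then show ?thesis using hyps m3 by (intro B3c) arith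
    next
      case 3 then show ?thesis using hyps m3 by (intro B3b) arith
    qed
  next
    case m4
    consider "0 < d" | "d = 0 \<and> e = 1" | "d = 0 \<and> 2 \<le> e"
      using hyps m4 by arith
    then show ?thesis
    proof cases
      case 1 then show ?thesis using hyps m4 by (intro B4a) arith
    next
      case 2 then show ?thesis using hyps m4 by (intro B4c) arith
    next
      case 3 then show ?thesis using hyps m4 by (intro B4b) arith
    qed
  qed
qed

lemma coreC: assumes nS: "\<not> inS [0,b,c,0,e,f,g]" and hb: "0<b" and hc: "0<c" and he: "0<e" and hf: "0<f" and hg: "0<g"
  shows "G [0,b,c,0,e,f,g]"
proof -
  note hyps = hb hc he hf hg
  have C10: "G [0,b,c,0,e,f,g]" if H: "g \<ge> e+f \<and> c \<ge> e+f"
    apply (rule Gwit[where ya="0" and yb="0" and yc="e+f" and yd="0" and ye="e" and yf="f" and yg="e+f" and C=S1_cond])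
    apply (rule nS)
    subgoal using H hyps by simp
    subgoal using H hyps by (simp add: min_def max_def; arith)
    subgoal apply (rule icI[where q="[0,0,e+f,0,e,f,e+f]"])
      subgoal by (simp add: sym_expl)
      subgoal by simp
      subgoal using H hyps by simp
      subgoal using H hyps by (simp add: S1_cond_def Let_def min_def max_def; arith)
      done
    by simp
  have C11: "G [0,b,c,0,e,f,g]" if H: "c \<ge> g \<and> f \<le> g \<and> g \<le> e+f"
    apply (rule Gwit[where ya="0" and yb="0" and yc="g" and yd="0" and ye="g - f" and yf="f" and yg="g" and C=S1_cond])
    apply (rule nS)
    subgoal using H hyps by simp
    subgoal using H hyps by (simp add: min_def max_def; arith)
    subgoal apply (rule icI[where q="[0,0,g,0,g - f,f,g]"])
      subgoal by (simp add: sym_expl)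
      subgoal by simp
      subgoal using H hyps by simp
      subgoal using H hyps by (simp add: S1_cond_def Let_def min_def max_def; arith)
      done
    by simp
  have C12: "G [0,b,c,0,e,f,g]" if H: "g \<ge> c \<and> e \<le> c \<and> c \<le> e+f"
    apply (rule Gwit[where ya="0" and yb="0" and yc="c" and yd="0" and ye="e" and yf="c - e" and yg="c" and C=S1_cond])
    apply (rule nS)
    subgoal using H hyps by simp
    subgoal using H hyps by (simp add: min_def max_def; arith)
    subgoal apply (rule icI[where q="[0,0,c,0,e,c - e,c]"])
      subgoal by (simp add: sym_expl)
      subgoal by simp
      subgoal using H hyps by simp
      subgoal using H hyps by (simp add: S1_cond_def Let_def min_def max_def; arith)
      done
    by simp
  have C20: "G [0,b,c,0,e,f,g]" if H: "b \<ge> f+g \<and> e \<ge> f+g"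
    apply (rule Gwit[where ya="0" and yb="f+g" and yc="0" and yd="0" and ye="f+g" and yf="f" and yg="g" and C=S1_cond])
    apply (rule nS)
    subgoal using H hyps by simp
    subgoal using H hyps by (simp add: min_def max_def; arith)
    subgoal apply (rule icI[where q="[0,0,f+g,f,g,0,f+g]"])
      subgoal by (simp add: sym_expl)
      subgoal by simp
      subgoal using H hyps by simp
      subgoal using H hyps by (simp add: S1_cond_def Let_def min_def max_def; arith)
      done
    by simp
  have C21: "G [0,b,c,0,e,f,g]" if H: "e \<ge> b \<and> g \<le> b \<and> b \<le> f+g"
    apply (rule Gwit[where ya="0" and yb="b" and yc="0" and yd="0" and ye="b" and yf="b - g" and yg="g" and C=S1_cond])
    apply (rule nS)
    subgoal using H hyps by simp
    subgoal using H hyps by (simp add: min_def max_def; arith)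
    subgoal apply (rule icI[where q="[0,0,b,b - g,g,0,b]"])
      subgoal by (simp add: sym_expl)
      subgoal by simp
      subgoal using H hyps by simp
      subgoal using H hyps by (simp add: S1_cond_def Let_def min_def max_def; arith)
      done
    by simp
  have C22: "G [0,b,c,0,e,f,g]" if H: "b \<ge> e \<and> f \<le> e \<and> e \<le> f+g"
    apply (rule Gwit[where ya="0" and yb="e" and yc="0" and yd="0" and ye="e" and yf="f" and yg="e - f" and C=S1_cond])
    apply (rule nS)
    subgoal using H hyps by simp
    subgoal using H hyps by (simp add: min_def max_def; arith)
    subgoal apply (rule icI[where q="[0,0,e,f,e - f,0,e]"])
      subgoal by (simp add: sym_expl)
      subgoal by simp
      subgoal using H hyps by simp
      subgoal using H hyps by (simp add: S1_cond_def Let_def min_def max_def; arith)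
      done
    by simp
  have C30: "G [0,b,c,0,e,f,g]" if H: "c \<ge> g+b \<and> f \<ge> g+b"
    apply (rule Gwit[where ya="0" and yb="b" and yc="g+b" and yd="0" and ye="0" and yf="g+b" and yg="g" and C=S1_cond])
    apply (rule nS)
    subgoal using H hyps by simp
    subgoal using H hyps by (simp add: min_def max_def; arith)
    subgoal apply (rule icI[where q="[0,0,g+b,b,0,g,g+b]"])
      subgoal by (simp add: sym_expl)
      subgoal by simp
      subgoal using H hyps by simp
      subgoal using H hyps by (simp add: S1_cond_def Let_def min_def max_def; arith)
      done
    by simp
  have C31: "G [0,b,c,0,e,f,g]" if H: "f \<ge> c \<and> b \<le> c \<and> c \<le> g+b"
    apply (rule Gwit[where ya="0" and yb="b" and yc="c" and yd="0" and ye="0" and yf="c" and yg="c - b" and C=S1_cond])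
    apply (rule nS)
    subgoal using H hyps by simp
    subgoal using H hyps by (simp add: min_def max_def; arith)
    subgoal apply (rule icI[where q="[0,0,c,b,0,c - b,c]"])
      subgoal by (simp add: sym_expl)
      subgoal by simp
      subgoal using H hyps by simp
      subgoal using H hyps by (simp add: S1_cond_def Let_def min_def max_def; arith)
      done
    by simp
  have C32: "G [0,b,c,0,e,f,g]" if H: "c \<ge> f \<and> g \<le> f \<and> f \<le> g+b"
    apply (rule Gwit[where ya="0" and yb="f - g" and yc="f" and yd="0" and ye="0" and yf="f" and yg="g" and C=S1_cond])
    apply (rule nS)
    subgoal using H hyps by simp
    subgoal using H hyps by (simp add: min_def max_def; arith)
    subgoal apply (rule icI[where q="[0,0,f,f - g,0,g,f]"])
      subgoal by (simp add: sym_expl)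
      subgoal by simp
      subgoal using H hyps by simp
      subgoal using H hyps by (simp add: S1_cond_def Let_def min_def max_def; arith)
      done
    by simp
  have C40: "G [0,b,c,0,e,f,g]" if H: "e \<ge> b+c \<and> g \<ge> b+c"
    apply (rule Gwit[where ya="0" and yb="b" and yc="c" and yd="0" and ye="b+c" and yf="0" and yg="b+c" and C=S4_cond])
    apply (rule nS)
    subgoal using H hyps by simp
    subgoal using H hyps by (simp add: min_def max_def; arith)
    subgoal apply (rule icI[where q="[0,b,c,0,b+c,0,b+c]"])
      subgoal by (simp add: sym_expl)
      subgoal by simp
      subgoal using H hyps by simp
      subgoal using H hyps by (simp add: S4_cond_def Let_def min_def max_def; arith)
      done
    by simp
  have C41: "G [0,b,c,0,e,f,g]" if H: "g \<ge> e \<and> c < e \<and> e \<le> b+c"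
    apply (rule Gwit[where ya="0" and yb="e - c" and yc="c" and yd="0" and ye="e" and yf="0" and yg="e" and C=S4_cond])
    apply (rule nS)
    subgoal using H hyps by simp
    subgoal using H hyps by (simp add: min_def max_def; arith)
    subgoal apply (rule icI[where q="[0,e - c,c,0,e,0,e]"])
      subgoal by (simp add: sym_expl)
      subgoal by simp
      subgoal using H hyps by simp
      subgoal using H hyps by (simp add: S4_cond_def Let_def min_def max_def; arith)
      done
    by simp
  have C42: "G [0,b,c,0,e,f,g]" if H: "e \<ge> g \<and> b < g \<and> g \<le> b+c"
    apply (rule Gwit[where ya="0" and yb="b" and yc="g - b" and yd="0" and ye="g" and yf="0" and yg="g" and C=S4_cond])
    apply (rule nS)
    subgoal using H hyps by simp
    subgoal using H hyps by (simp add: min_def max_def; arith)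
    subgoal apply (rule icI[where q="[0,b,g - b,0,g,0,g]"])
      subgoal by (simp add: sym_expl)
      subgoal by simp
      subgoal using H hyps by simp
      subgoal using H hyps by (simp add: S4_cond_def Let_def min_def max_def; arith)
      done
    by simp
  have C50: "G [0,b,c,0,e,f,g]" if H: "f \<ge> c+e \<and> b \<ge> c+e"
    apply (rule Gwit[where ya="0" and yb="c+e" and yc="c" and yd="0" and ye="e" and yf="c+e" and yg="0" and C=S1_cond])
    apply (rule nS)
    subgoal using H hyps by simp
    subgoal using H hyps by (simp add: min_def max_def; arith)
    subgoal apply (rule icI[where q="[0,0,c+e,c,0,e,c+e]"])
      subgoal by (simp add: sym_expl)
      subgoal by simp
      subgoal using H hyps by simp
      subgoal using H hyps by (simp add: S1_cond_def Let_def min_def max_def; arith)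
      done
    by simp
  have C51: "G [0,b,c,0,e,f,g]" if H: "b \<ge> f \<and> e \<le> f \<and> f \<le> c+e"
    apply (rule Gwit[where ya="0" and yb="f" and yc="f - e" and yd="0" and ye="e" and yf="f" and yg="0" and C=S1_cond])
    apply (rule nS)
    subgoal using H hyps by simp
    subgoal using H hyps by (simp add: min_def max_def; arith)
    subgoal apply (rule icI[where q="[0,0,f,f - e,0,e,f]"])
      subgoal by (simp add: sym_expl)
      subgoal by simp
      subgoal using H hyps by simp
      subgoal using H hyps by (simp add: S1_cond_def Let_def min_def max_def; arith)
      done
    by simp
  have C52: "G [0,b,c,0,e,f,g]" if H: "f \<ge> b \<and> c \<le> b \<and> b \<le> c+e"
    apply (rule Gwit[where ya="0" and yb="b" and yc="c" and yd="0" and ye="b - c" and yf="b" and yg="0" and C=S1_cond])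
    apply (rule nS)
    subgoal using H hyps by simp
    subgoal using H hyps by (simp add: min_def max_def; arith)
    subgoal apply (rule icI[where q="[0,0,b,c,0,b - c,b]"])
      subgoal by (simp add: sym_expl)
      subgoal by simp
      subgoal using H hyps by simp
      subgoal using H hyps by (simp add: S1_cond_def Let_def min_def max_def; arith)
      done
    by simp
  consider (mx1) "c \<le> b \<and> e \<le> b \<and> f \<le> b \<and> g \<le> b" | (mx2) "b \<le> c \<and> e \<le> c \<and> f \<le> c \<and> g \<le> c" | (mx3) "b \<le> e \<and> c \<le> e \<and> f \<le> e \<and> g \<le> e" | (mx4) "b \<le> f \<and> c \<le> f \<and> e \<le> f \<and> g \<le> f" | (mx5) "b \<le> g \<and> c \<le> g \<and> e \<le> g \<and> f \<le> g"
    using hyps by arith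
  then show ?thesis
  proof cases
    case mx1
    consider "e > f \<and> e \<le> f+g" | "e > f \<and> e > f+g" | "e = f" | "e < f \<and> f \<le> e+c" | "e < f \<and> f > e+c" by arith
    then show ?thesis
    proof cases
      case 1 then show ?thesis using hyps mx1 by (intro C22) arith
    next
      case 2 then show ?thesis using hyps mx1 by (intro C20) arith
    next
      case 3 then show ?thesis using hyps mx1 by (intro C22) arith
    next
      case 4 then show ?thesis using hyps mx1 by (intro C51) arith
    next
      case 5 then show ?thesis using hyps mx1 by (intro C50) arith
    qed
  next
    case mx2
    consider "f > g \<and> f \<le> g+b" | "f > g \<and> f > g+b" | "f = g" | "f < g \<and> g \<le> f+e" | "f < g \<and> g > f+e" by arith
    then show ?thesis
    proof cases
      case 1 then show ?thesis using hyps mx2 by (intro C32) arith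
    next
      case 2 then show ?thesis using hyps mx2 by (intro C30) arith
    next
      case 3 then show ?thesis using hyps mx2 by (intro C32) arith
    next
      case 4 then show ?thesis using hyps mx2 by (intro C11) arith
    next
      case 5 then show ?thesis using hyps mx2 by (intro C10) arith
    qed
  next
    case mx3
    consider "g > b \<and> g \<le> b+c" | "g > b \<and> g > b+c" | "g = b" | "g < b \<and> b \<le> g+f" | "g < b \<and> b > g+f" by arith
    then show ?thesis
    proof cases
      case 1 then show ?thesis using hyps mx3 by (intro C42) arith
    next
      case 2 then show ?thesis using hyps mx3 by (intro C40) arith
    next
      case 3 then show ?thesis using hyps mx3 by (intro C21) arith
    next
      case 4 then show ?thesis using hyps mx3 by (intro C21) arith
    next
      case 5 then show ?thesis using hyps mx3 by (intro C20) arith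
    qed
  next
    case mx4
    consider "b > c \<and> b \<le> c+e" | "b > c \<and> b > c+e" | "b = c" | "b < c \<and> c \<le> b+g" | "b < c \<and> c > b+g" by arith
    then show ?thesis
    proof cases
      case 1 then show ?thesis using hyps mx4 by (intro C52) arith
    next
      case 2 then show ?thesis using hyps mx4 by (intro C50) arith
    next
      case 3 then show ?thesis using hyps mx4 by (intro C52) arith
    next
      case 4 then show ?thesis using hyps mx4 by (intro C31) arith
    next
      case 5 then show ?thesis using hyps mx4 by (intro C30) arith
    qed
  next
    case mx5
    consider "c > e \<and> c \<le> e+f" | "c > e \<and> c > e+f" | "c = e" | "c < e \<and> e \<le> c+b" | "c < e \<and> e > c+b" by arith
    then show ?thesis
    proof cases
      case 1 then show ?thesis using hyps mx5 by (intro C12) arith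
    next
      case 2 then show ?thesis using hyps mx5 by (intro C10) arith
    next
      case 3 then show ?thesis using hyps mx5 by (intro C12) arith
    next
      case 4 then show ?thesis using hyps mx5 by (intro C41) arith
    next
      case 5 then show ?thesis using hyps mx5 by (intro C40) arith
    qed
  qed
qed


definition K :: "nat list \<Rightarrow> bool" where "K p \<longleftrightarrow> (\<not> inS p \<longrightarrow> G p)"

lemma inS_rot1: "inS [x1,x2,x3,x4,x5,x6,x0] = inS [x0,x1,x2,x3,x4,x5,x6]"
  unfolding inS_def in_class_rot1 ..

lemma K_back: "K [x1,x2,x3,x4,x5,x6,x0] \<Longrightarrow> K [x0,x1,x2,x3,x4,x5,x6]"
  unfolding K_def inS_rot1
  using G_rot1[OF G_rot1[OF G_rot1[OF G_rot1[OF G_rot1[OF G_rot1]]]]] by blast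

lemma K_A: "a = 0 \<Longrightarrow> b = 0 \<Longrightarrow> K [a,b,c,d,e,f,g]"
  unfolding K_def using coreA by blast
lemma K_B: "a = 0 \<Longrightarrow> f = 0 \<Longrightarrow> 0 < b \<Longrightarrow> 0 < e \<Longrightarrow> 0 < g \<Longrightarrow> 0 < c \<or> 0 < d \<Longrightarrow> K [a,b,c,d,e,f,g]"
  unfolding K_def using coreB by blast
lemma K_C: "a = 0 \<Longrightarrow> d = 0 \<Longrightarrow> 0 < b \<Longrightarrow> 0 < c \<Longrightarrow> 0 < e \<Longrightarrow> 0 < f \<Longrightarrow> 0 < g \<Longrightarrow> K [a,b,c,d,e,f,g]"
  unfolding K_def using coreC by blast

lemma two_elems: "2 \<le> card S \<Longrightarrow> \<exists>a b. a \<in> S \<and> b \<in> S \<and> a \<noteq> b"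
proof (rule ccontr)
  assume c: "2 \<le> card S" and n: "\<not> (\<exists>a b. a \<in> S \<and> b \<in> S \<and> a \<noteq> b)"
  then have fin: "finite S" using card.infinite by fastforce
  have "card S \<le> Suc 0" using n card_le_Suc0_iff_eq[OF fin] by blast
  then show False using c by simp
qed
lemma Krot1: "K [x1,x2,x3,x4,x5,x6,x0] \<Longrightarrow> K [x0,x1,x2,x3,x4,x5,x6]"
  apply (rule K_back)
  by assumption
lemma Krot2: "K [x2,x3,x4,x5,x6,x0,x1] \<Longrightarrow> K [x0,x1,x2,x3,x4,x5,x6]"
  apply (rule K_back)
  apply (rule K_back)
  by assumption
lemma Krot3: "K [x3,x4,x5,x6,x0,x1,x2] \<Longrightarrow> K [x0,x1,x2,x3,x4,x5,x6]"
  apply (rule K_back)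
  apply (rule K_back)
  apply (rule K_back)
  by assumption
lemma Krot4: "K [x4,x5,x6,x0,x1,x2,x3] \<Longrightarrow> K [x0,x1,x2,x3,x4,x5,x6]"
  apply (rule K_back)
  apply (rule K_back)
  apply (rule K_back)
  apply (rule K_back)
  by assumption
lemma Krot5: "K [x5,x6,x0,x1,x2,x3,x4] \<Longrightarrow> K [x0,x1,x2,x3,x4,x5,x6]"
  apply (rule K_back)
  apply (rule K_back)
  apply (rule K_back)
  apply (rule K_back)
  apply (rule K_back)
  by assumption
lemma Krot6: "K [x6,x0,x1,x2,x3,x4,x5] \<Longrightarrow> K [x0,x1,x2,x3,x4,x5,x6]"
  apply (rule K_back)
  apply (rule K_back)
  apply (rule K_back)
  apply (rule K_back)
  apply (rule K_back)
  apply (rule K_back)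
  by assumption

lemma Kmain:
  assumes "2 \<le> card {j. j < 7 \<and> [x0,x1,x2,x3,x4,x5,x6]!j = 0}"
  shows "K [x0,x1,x2,x3,x4,x5,x6]"
proof -
  obtain i j where ij: "i < 7" "j < 7" "i \<noteq> j" "[x0,x1,x2,x3,x4,x5,x6]!i = 0" "[x0,x1,x2,x3,x4,x5,x6]!j = 0"
    using two_elems[OF assms] by blast
  have "\<exists>i<7. \<exists>j<7. i \<noteq> j \<and> [x0,x1,x2,x3,x4,x5,x6]!i = 0 \<and> [x0,x1,x2,x3,x4,x5,x6]!j = 0"
    using ij by blast
  then have all: "((x0 = 0 \<and> x1 = 0) \<or> (x1 = 0 \<and> x2 = 0) \<or> (x2 = 0 \<and> x3 = 0) \<or> (x3 = 0 \<and> x4 = 0) \<or> (x4 = 0 \<and> x5 = 0) \<or> (x5 = 0 \<and> x6 = 0) \<or> (x6 = 0 \<and> x0 = 0)) \<or> ((x0 = 0 \<and> x5 = 0) \<or> (x1 = 0 \<and> x6 = 0) \<or> (x2 = 0 \<and> x0 = 0) \<or> (x3 = 0 \<and> x1 = 0) \<or> (x4 = 0 \<and> x2 = 0) \<or> (x5 = 0 \<and> x3 = 0) \<or> (x6 = 0 \<and> x4 = 0)) \<or> ((x0 = 0 \<and> x3 = 0) \<or> (x1 = 0 \<and> x4 = 0) \<or> (x2 = 0 \<and> x5 = 0) \<or> (x3 = 0 \<and> x6 = 0) \<or> (x4 = 0 \<and> x0 = 0) \<or> (x5 = 0 \<and> x1 = 0) \<or> (x6 = 0 \<and> x2 = 0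))"
    unfolding ex7 apply (elim disjE) apply simp_all done
  show ?thesis
  proof (cases "(x0 = 0 \<and> x1 = 0) \<or> (x1 = 0 \<and> x2 = 0) \<or> (x2 = 0 \<and> x3 = 0) \<or> (x3 = 0 \<and> x4 = 0) \<or> (x4 = 0 \<and> x5 = 0) \<or> (x5 = 0 \<and> x6 = 0) \<or> (x6 = 0 \<and> x0 = 0)")
    case True
    then show ?thesis
      apply (elim disjE)
      apply (rule K_A; simp)
      apply (rule Krot1, rule K_A; simp)
      apply (rule Krot2, rule K_A; simp)
      apply (rule Krot3, rule K_A; simp)
      apply (rule Krot4, rule K_A; simp)
      apply (rule Krot5, rule K_A; simp)
      apply (rule Krot6, rule K_A; simp)
      done
  next
    case nA: False
    show ?thesis
    proof (cases "(x0 = 0 \<and> x5 = 0) \<or> (x1 = 0 \<and> x6 = 0) \<or> (x2 = 0 \<and> x0 = 0) \<or> (x3 = 0 \<and> x1 = 0) \<or> (x4 = 0 \<and> x2 = 0) \<or> (x5 = 0 \<and> x3 = 0) \<or> (x6 = 0 \<and> x4 = 0)")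
      case True
      then show ?thesis
        apply (elim disjE)
        apply (rule K_B; use nA in auto)
        apply (rule Krot1, rule K_B; use nA in auto)
        apply (rule Krot2, rule K_B; use nA in auto)
        apply (rule Krot3, rule K_B; use nA in auto)
        apply (rule Krot4, rule K_B; use nA in auto)
        apply (rule Krot5, rule K_B; use nA in auto)
        apply (rule Krot6, rule K_B; use nA in auto)
        done
    next
      case nB: False
      then have "(x0 = 0 \<and> x3 = 0) \<or> (x1 = 0 \<and> x4 = 0) \<or> (x2 = 0 \<and> x5 = 0) \<or> (x3 = 0 \<and> x6 = 0) \<or> (x4 = 0 \<and> x0 = 0) \<or> (x5 = 0 \<and> x1 = 0) \<or> (x6 = 0 \<and> x2 = 0)" using all nA by argo
      then show ?thesis
        apply (elim disjE)
        apply (rule K_C; use nA nB in auto)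
        apply (rule Krot1, rule K_C; use nA nB in auto)
        apply (rule Krot2, rule K_C; use nA nB in auto)
        apply (rule Krot3, rule K_C; use nA nB in auto)
        apply (rule Krot4, rule K_C; use nA nB in auto)
        apply (rule Krot5, rule K_C; use nA nB in auto)
        apply (rule Krot6, rule K_C; use nA nB in auto)
        done
    qed
  qed
qed

theorem lemma2:
  fixes p :: "nat list"
  assumes "cn_pos p"
    and "\<not> inS p"
    and "card {j. j < 7 \<and> p!j = 0} \<ge> 2"
  shows "\<exists>p'. cn_move p p' \<and>
           (in_class S1_cond p' \<or> in_class S2_cond p' \<or> in_class S4_cond p')"
proof -
  obtain x0 x1 x2 x3 x4 x5 x6 where p: "p = [x0,x1,x2,x3,x4,x5,x6]"
    using assms(1) len7 unfolding cn_pos_def by blast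
  have "K p" using Kmain assms(3) unfolding p by blast
  then show ?thesis using assms(2) unfolding K_def G_def by blast
qed

end
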